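(* Let $\kappa<0$ and let $u=u(r;u_0)$ be the solution of $\frac{d}{dr}\big(u'/\sqrt{1+u'^2}\big)=\kappa u$, $u(0)=u_0$, $u'(0)=0$, with $$-\sqrt{\frac{-2}\kappa}<u_0<0.$$ Let $R>0$ be the first positive zero of $u$. Then $$\frac1{\sqrt{-2\kappa}}<R<\sqrt{\frac{-2e}\kappa}.$$
   Context: Under the hypothesis on $u_0$, $u$ is defined on all of $\mathbb R$, periodic, increasing on $[0,R]$, and has positive zeros; it is the profile of a pendent $\kappa$-cylindrical surface. *)

theory Defs
  imports Complex_Main
begin

end

theory Submission
  imports Defs "HOL-Analysis.Complex_Transcendental"
begin

theorem mainTheorem18:
  fixes \<kappa> u0 R :: real and u u' :: "real \<Rightarrow> real"
  assumes kappa: "\<kappa> < 0"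
    and u0: "- sqrt (-2 / \<kappa>) < u0" "u0 < 0"
    and deriv_u: "\<And>r. (u has_real_derivative u' r) (at r)"
    and ode: "\<And>r. ((\<lambda>s. u' s / sqrt (1 + (u' s)\<^sup>2)) has_real_derivative \<kappa> * u r) (at r)"
    and init: "u 0 = u0" "u' 0 = 0"
    and R_pos: "R > 0" and R_zero: "u R = 0"
    and R_first: "\<And>r. 0 < r \<Longrightarrow> r < R \<Longrightarrow> u r \<noteq> 0"
  shows "1 / sqrt (-2 * \<kappa>) < R \<and> R < sqrt (-2 * exp 1 / \<kappa>)"
proof -
  define \<phi> where "\<phi> r = u' r / sqrt (1 + (u' r)\<^sup>2)" for r
  define k where "k = - \<kappa>"
  define a where "a = - u0"
  have k: "k > 0" using kappa k_def by simp
  have a: "a > 0" using u0 a_def by simp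
  have "a < sqrt (2 / k)" using u0 a_def k_def by simp
  then have "a\<^sup>2 < 2 / k" using a
    by (metis real_less_rsqrt power2_less_imp_less abs_of_pos real_sqrt_abs real_sqrt_less_iff)
  then have ka: "k * a\<^sup>2 < 2" using k by (simp add: field_simps)
  have sq1: "sqrt (1 + (u' r)\<^sup>2) > 0" for r by (simp add: add_pos_nonneg)
  have sq1s: "(sqrt (1 + (u' r)\<^sup>2))\<^sup>2 = 1 + (u' r)\<^sup>2" for r by (simp add: add_nonneg_nonneg)
  have om: "1 - (\<phi> r)\<^sup>2 = 1 / (1 + (u' r)\<^sup>2)" for r
  proof -
    have h: "1 + (u' r)\<^sup>2 \<noteq> 0" by (smt (verit) zero_le_power2)
    show ?thesis unfolding \<phi>_def power_divide sq1s using h by (simp add: field_simps)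
  qed
  have om_pos: "1 - (\<phi> r)\<^sup>2 > 0" for r unfolding om by (simp add: add_pos_nonneg)
  have c_eq: "sqrt (1 - (\<phi> r)\<^sup>2) = 1 / sqrt (1 + (u' r)\<^sup>2)" for r
    unfolding om by (simp add: real_sqrt_divide)
  have u'_eq: "u' r = \<phi> r / sqrt (1 - (\<phi> r)\<^sup>2)" for r
  proof -
    have "\<phi> r / sqrt (1 - (\<phi> r)\<^sup>2) = \<phi> r * sqrt (1 + (u' r)\<^sup>2)" unfolding c_eq by simp
    also have "\<dots> = u' r" unfolding \<phi>_def using sq1[of r] by simp
    finally show ?thesis by simp
  qed
  have dphi: "(\<phi> has_real_derivative \<kappa> * u r) (at r)" for r
    using ode[of r] unfolding \<phi>_def[abs_def] .
  have dE: "((\<lambda>r. sqrt (1 - (\<phi> r)\<^sup>2) + \<kappa> * (u r)\<^sup>2 / 2) has_real_derivative 0) (at r)" for r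
  proof -
    have "((\<lambda>r. sqrt (1 - (\<phi> r)\<^sup>2) + \<kappa> * (u r)\<^sup>2 / 2) has_real_derivative
       inverse (sqrt (1 - (\<phi> r)\<^sup>2)) / 2 * (- (2 * \<phi> r * (\<kappa> * u r))) + \<kappa> * (2 * u r * u' r) / 2) (at r)"
      using om_pos[of r]
      by (auto intro!: derivative_eq_intros dphi deriv_u)
    moreover have "inverse (sqrt (1 - (\<phi> r)\<^sup>2)) / 2 * (- (2 * \<phi> r * (\<kappa> * u r))) + \<kappa> * (2 * u r * u' r) / 2 = 0"
      by (subst u'_eq) (simp add: field_simps)
    ultimately show ?thesis by metis
  qed
  have phi0: "\<phi> 0 = 0" using init by (simp add: \<phi>_def)
  have E: "sqrt (1 - (\<phi> r)\<^sup>2) + \<kappa> * (u r)\<^sup>2 / 2 = 1 + \<kappa> * u0\<^sup>2 / 2" for r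
    using DERIV_isconst_all[of "\<lambda>r. sqrt (1 - (\<phi> r)\<^sup>2) + \<kappa> * (u r)\<^sup>2 / 2" r 0] dE phi0 init
    by simp
  have ubound: "(u r)\<^sup>2 \<le> a\<^sup>2" for r
  proof -
    have "sqrt (1 - (\<phi> r)\<^sup>2) \<le> 1" using om_pos[of r] by simp
    then have "\<kappa> * (u r)\<^sup>2 / 2 - \<kappa> * u0\<^sup>2 / 2 \<ge> 0" using E[of r] by linarith
    then have "\<kappa> * ((u r)\<^sup>2 - u0\<^sup>2) \<ge> 0" by (simp add: algebra_simps)
    then have "(u r)\<^sup>2 - u0\<^sup>2 \<le> 0" using kappa by (simp add: zero_le_mult_iff)
    then show ?thesis using a_def by simp
  qed
  have uge: "u r \<ge> u0" for r
    using ubound[of r] a_def u0 by (smt (verit) power2_le_imp_le power2_minus)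
  have cont_u: "isCont u r" for r using deriv_u DERIV_isCont by blast
  have uneg: "u r < 0" if "0 \<le> r" "r < R" for r
  proof (rule ccontr)
    assume "\<not> u r < 0"
    then have "r > 0" using that init u0 by (cases "r = 0") auto
    then obtain x where "0 \<le> x" "x \<le> r" "u x = 0"
      using IVT[of u 0 0 r] \<open>\<not> u r < 0\<close> init u0 cont_u by auto
    then show False using R_first[of x] init u0 that by (cases "x = 0") auto
  qed
  have phipos: "\<phi> r > 0" if r0: "0 < r" "r \<le> R" for r
  proof -
    obtain z where "0 < z" "z < r" "\<phi> r - \<phi> 0 = (r - 0) * (\<kappa> * u z)"
      using MVT2[of 0 r \<phi> "\<lambda>r. \<kappa> * u r"] dphi r0 by auto
    moreover have "u z < 0" using uneg[of z] r0 \<open>0 < z\<close> \<open>z < r\<close> by auto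
    moreover have "\<kappa> * u z > 0" using kappa \<open>u z < 0\<close> by (rule mult_neg_neg)
    ultimately show ?thesis using phi0 r0 by (metis mult_pos_pos diff_zero)
  qed
  define c0 where "c0 = 1 - k * a\<^sup>2 / 2"
  have c0: "0 < c0" "c0 < 1" using ka k a unfolding c0_def by auto
  have ER: "sqrt (1 - (\<phi> R)\<^sup>2) = c0" using E[of R] R_zero unfolding c0_def k_def a_def by simp
  have phiR2: "(\<phi> R)\<^sup>2 = 1 - c0\<^sup>2"
  proof -
    have "(sqrt (1 - (\<phi> R)\<^sup>2))\<^sup>2 = 1 - (\<phi> R)\<^sup>2" using om_pos[of R] by simp
    then show ?thesis using ER by simp
  qed
  have lower: "1 / sqrt (-2 * \<kappa>) < R"
  proof -
    obtain z where "0 < z" "z < R" "\<phi> R - \<phi> 0 = (R - 0) * (\<kappa> * u z)"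
      using MVT2[of 0 R \<phi> "\<lambda>r. \<kappa> * u r"] dphi R_pos by auto
    then have "\<phi> R = R * (k * (- u z))" using phi0 k_def by simp
    moreover have "- u z \<le> a" using uge[of z] a_def by simp
    ultimately have le: "\<phi> R \<le> R * k * a" using R_pos k
      by (metis mult.assoc mult_left_mono mult_pos_pos less_imp_le)
    have "0 < \<phi> R" using phipos R_pos by simp
    then have "(\<phi> R)\<^sup>2 \<le> (R * k * a)\<^sup>2" using le by (simp add: power_mono)
    then have "1 - c0\<^sup>2 \<le> R\<^sup>2 * k\<^sup>2 * a\<^sup>2" using phiR2 by (simp add: power_mult_distrib)
    moreover have "1 - c0\<^sup>2 = k * a\<^sup>2 * (1 - k * a\<^sup>2 / 4)" unfolding c0_def by (simp add: field_simps power2_eq_square)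
    ultimately have "k * a\<^sup>2 * (1 - k * a\<^sup>2 / 4) \<le> k * a\<^sup>2 * (R\<^sup>2 * k)"
      by (simp add: power2_eq_square algebra_simps)
    then have "1 - k * a\<^sup>2 / 4 \<le> R\<^sup>2 * k" using k a by (simp add: mult_le_cancel_left_pos)
    then have "1 / 2 < R\<^sup>2 * k" using ka by simp
    then have "1 / (2 * k) < R\<^sup>2" using k by (simp add: field_simps)
    then have "sqrt (1 / (2 * k)) < R" using R_pos by (simp add: real_sqrt_less_iff real_less_lsqrt)
    moreover have "sqrt (1 / (2 * k)) = 1 / sqrt (2 * k)" by (rule real_sqrt_divide[of 1, simplified])
    moreover have "2 * k = -2 * \<kappa>" unfolding k_def by simp
    ultimately show ?thesis by simp
  qed
  have u'pos: "u' z > 0" if "0 < z" "z \<le> R" for z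
    using phipos[OF that] om_pos[of z] u'_eq[of z] by simp
  have ugt: "u r > u0" if r0: "0 < r" "r \<le> R" for r
  proof -
    obtain z where "0 < z" "z < r" "u r - u 0 = (r - 0) * u' z"
      using MVT2[of 0 r u u'] deriv_u r0 by auto
    moreover have "u' z > 0" using u'pos[of z] \<open>0 < z\<close> \<open>z < r\<close> r0 by simp
    ultimately show ?thesis using init r0 by (metis mult_pos_pos diff_zero diff_gt_0_iff_gt)
  qed
  define \<theta> where "\<theta> r = arcsin (u r / u0)" for r
  have ule: "u r \<le> a" for r using ubound[of r] a
    by (meson power2_le_imp_le less_imp_le)
  have cont\<theta>: "continuous_on {0..R} \<theta>"
    unfolding \<theta>_def
  proof (intro continuous_intros ballI conjI)
    show "continuous_on {0..R} u" using cont_u by (simp add: continuous_at_imp_continuous_on)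
    fix x assume "x \<in> {0..R}"
    show "- 1 \<le> u x / u0" using ule[of x] a_def u0 by (simp add: field_simps)
    show "u x / u0 \<le> 1" using uge[of x] u0 by (simp add: field_simps)
  qed (use u0 in auto)
  have dtheta: "(\<theta> has_real_derivative inverse (sqrt (1 - (u z / u0)\<^sup>2)) * (u' z / u0)) (at z)"
    if z: "0 < z" "z < R" for z
  proof -
    have "u z / u0 > 0" using uneg[of z] z u0 by (simp add: divide_neg_neg)
    moreover have "u z / u0 < 1" using ugt[of z] z u0 by (simp add: field_simps)
    ultimately show ?thesis unfolding \<theta>_def[abs_def]
      by (intro DERIV_chain2[OF DERIV_arcsin] derivative_eq_intros deriv_u) (auto simp: deriv_u)
  qed
  have dbound: "inverse (sqrt (1 - (u z / u0)\<^sup>2)) * (u' z / u0) \<le> - sqrt (k / 2)"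
    if z: "0 < z" "z < R" for z
  proof -
    define w where "w = - u z"
    have w: "0 < w" "w < a" using uneg[of z] ugt[of z] z unfolding w_def a_def by auto
    define c where "c = sqrt (1 - (\<phi> z)\<^sup>2)"
    have c_val: "c = 1 - k * (a\<^sup>2 - w\<^sup>2) / 2"
      using E[of z] unfolding c_def k_def a_def w_def by (simp add: field_simps)
    have aw: "0 < a\<^sup>2 - w\<^sup>2" using w by (simp add: power_strict_mono)
    have c1: "c \<le> 1" using c_val k aw by simp
    have c0': "0 < c" unfolding c_def using om_pos[of z] by simp
    have phi2: "(\<phi> z)\<^sup>2 = 1 - c\<^sup>2" unfolding c_def using om_pos[of z] by simp
    have u'c: "u' z = \<phi> z / c" using u'_eq[of z] c_def by simp
    have "(u' z)\<^sup>2 = (1 - c\<^sup>2) / c\<^sup>2" using u'c phi2 by (simp add: power_divide)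
    also have "\<dots> \<ge> 1 - c\<^sup>2"
    proof -
      have "c\<^sup>2 \<le> 1" using c1 c0' by (simp add: power_le_one)
      moreover have "c\<^sup>2 > 0" using c0' by simp
      ultimately show ?thesis by (simp add: le_divide_eq mult_left_le)
    qed
    finally have "(u' z)\<^sup>2 \<ge> 1 - c\<^sup>2" .
    moreover have "1 - c\<^sup>2 \<ge> 1 - c" using c1 c0' by (simp add: power2_eq_square mult_left_le)
    ultimately have "(u' z)\<^sup>2 \<ge> (k / 2) * (a\<^sup>2 - w\<^sup>2)" using c_val by simp
    moreover have "u' z > 0" using u'pos z by simp
    ultimately have u'ge: "u' z \<ge> sqrt (k / 2) * sqrt (a\<^sup>2 - w\<^sup>2)"
      by (metis real_le_lsqrt less_imp_le real_sqrt_mult real_sqrt_le_mono real_sqrt_pow2_iff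
          less_eq_real_def)
    have "sqrt (1 - (u z / u0)\<^sup>2) * a = sqrt (a\<^sup>2 - w\<^sup>2)"
    proof -
      have "1 - (u z / u0)\<^sup>2 = (a\<^sup>2 - w\<^sup>2) / a\<^sup>2" unfolding w_def a_def using u0
        by (simp add: field_simps power2_eq_square)
      then show ?thesis using a by (simp add: real_sqrt_divide)
    qed
    then have XQ: "sqrt (1 - (u z / u0)\<^sup>2) * u0 = - sqrt (a\<^sup>2 - w\<^sup>2)" unfolding a_def by simp
    have "inverse (sqrt (1 - (u z / u0)\<^sup>2)) * (u' z / u0) = u' z / (sqrt (1 - (u z / u0)\<^sup>2) * u0)"
      by (simp add: divide_inverse mult_ac)
    also have "\<dots> = - u' z / sqrt (a\<^sup>2 - w\<^sup>2)" unfolding XQ by simp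
    finally have "inverse (sqrt (1 - (u z / u0)\<^sup>2)) * (u' z / u0) = - u' z / sqrt (a\<^sup>2 - w\<^sup>2)" .
    also have "\<dots> \<le> - sqrt (k / 2)"
      using u'ge aw by (simp add: field_simps)
    finally show ?thesis .
  qed
  obtain l z where lz: "0 < z" "z < R" "(\<theta> has_real_derivative l) (at z)" "\<theta> R - \<theta> 0 = (R - 0) * l"
    using MVT[OF R_pos cont\<theta>] dtheta by (metis real_differentiable_def)
  have "l = inverse (sqrt (1 - (u z / u0)\<^sup>2)) * (u' z / u0)"
    using DERIV_unique[OF lz(3) dtheta[OF lz(1,2)]] .
  then have lle: "l \<le> - sqrt (k / 2)" using dbound lz by simp
  have "\<theta> R - \<theta> 0 = - pi / 2" unfolding \<theta>_def using R_zero init u0 by simp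
  then have "R * l = - pi / 2" using lz(4) by simp
  moreover have "R * l \<le> R * (- sqrt (k / 2))" using lle R_pos by (intro mult_left_mono) auto
  ultimately have "R * sqrt (k / 2) \<le> pi / 2" by simp
  then have "(R * sqrt (k / 2))\<^sup>2 \<le> (pi / 2)\<^sup>2" using R_pos k by (simp add: power_mono)
  then have R2: "R\<^sup>2 * k \<le> pi\<^sup>2 / 2" using k by (simp add: power_mult_distrib power_divide mult_ac)
  have "pi\<^sup>2 < 4 * exp 1"
  proof -
    have "pi \<le> 3.16" using pi_approx(2) by simp
    then have "pi\<^sup>2 \<le> 3.16\<^sup>2" using pi_gt_zero by (intro power_mono) auto
    moreover have "(3.16::real)\<^sup>2 < 10" by (simp add: power2_eq_square)
    moreover have "(5/2::real) \<le> exp 1" using exp_lower_Taylor_quadratic[of 1] by simp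
    ultimately show ?thesis by linarith
  qed
  then have "R\<^sup>2 * k < 2 * exp 1" using R2 by simp
  then have "R\<^sup>2 < -2 * exp 1 / \<kappa>" using k unfolding k_def by (simp add: field_simps)
  then have upper: "R < sqrt (-2 * exp 1 / \<kappa>)" using R_pos by (simp add: real_less_rsqrt)
  show ?thesis using lower upper by simp
qed

end
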